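(* Let $\Sigma$ be an alphabet, $n\ge1$, $L\ge 1$, and $B$ a fixed integer. Let $h_1:\Sigma\to[0,2^L)$ be a random function whose values $h_1(c)$, $c\in\Sigma$, are mutually independent and uniformly distributed on $[0,2^L)$, and define $h(x_1,\dots,x_n)=\left(\sum_{i=1}^n B^{n-i}h_1(x_i)\right)\bmod 2^L$. Then: (i) if $n$ is even and $B$ is odd, $h$ is not uniform (there exist an $n$-gram $x$ and a value $y$ with $P(h(x)=y)\neq 2^{-L}$); (ii) if $B$ is even (and $n\ge1$ arbitrary), or if $B$ and $n$ are both odd, $h$ is uniform: $P(h(x)=y)=2^{-L}$ for every $n$-gram $x$ and every $y\in[0,2^L)$; (iii) if $n\ge 2$ and $|\Sigma|\ge 2$, then for every $B$ there exist distinct $n$-grams $w_1,w_2$ with $P(h(w_1)=h(w_2))>2^{-L}$; in particular $h$ is neither pairwise independent nor 2-universal.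
   Context: An $n$-gram is an element of $\Sigma^n$. A random hash function $h:\Sigma^n\to[0,2^L)$ is pairwise independent if $P(h(x_1)=y\wedge h(x_2)=z)=4^{-L}$ for all distinct $n$-grams $x_1,x_2$ and all $y,z$; it is 2-universal if $P(h(x_1)=h(x_2))\le 2^{-L}$ for all distinct $x_1,x_2$. *)

theory Defs
  imports "HOL-Probability.Probability"
begin

text \<open>The random character hash h1 : 'a \<Rightarrow> [0,2^L)
  with mutually independent uniform values is the uniform distribution on all
  functions 'a \<Rightarrow> {0..<2^L}.\<close>

definition char_hash :: "nat \<Rightarrow> ('a::finite \<Rightarrow> int) pmf" where
  "char_hash L = pmf_of_set (PiE UNIV (\<lambda>_. {0..<2^L}))"

text \<open>n-grams are lists of length n; index i (0-based) corresponds to x_{i+1}.\<close>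

definition ngram_hash :: "nat \<Rightarrow> int \<Rightarrow> nat \<Rightarrow> ('a \<Rightarrow> int) \<Rightarrow> 'a list \<Rightarrow> int" where
  "ngram_hash L B n h1 xs = (\<Sum>i<n. B ^ (n - 1 - i) * h1 (xs ! i)) mod 2 ^ L"

definition recursive_hash :: "nat \<Rightarrow> int \<Rightarrow> nat \<Rightarrow> ('a::finite list \<Rightarrow> int) pmf" where
  "recursive_hash L B n = map_pmf (ngram_hash L B n) (char_hash L)"

definition ngrams :: "nat \<Rightarrow> 'a list set" where
  "ngrams n = {xs. length xs = n}"

definition uniform_hash :: "('b \<Rightarrow> int) pmf \<Rightarrow> 'b set \<Rightarrow> nat \<Rightarrow> bool" where
  "uniform_hash H X L \<longleftrightarrow>
     (\<forall>x\<in>X. \<forall>y\<in>{0..<2^L}. measure_pmf.prob H {h. h x = y} = 1 / 2 ^ L)"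

definition pairwise_independent :: "('b \<Rightarrow> int) pmf \<Rightarrow> 'b set \<Rightarrow> nat \<Rightarrow> bool" where
  "pairwise_independent H X L \<longleftrightarrow>
     (\<forall>x1\<in>X. \<forall>x2\<in>X. x1 \<noteq> x2 \<longrightarrow> (\<forall>y\<in>{0..<2^L}. \<forall>z\<in>{0..<2^L}.
        measure_pmf.prob H {h. h x1 = y \<and> h x2 = z} = 1 / 4 ^ L))"

definition two_universal :: "('b \<Rightarrow> int) pmf \<Rightarrow> 'b set \<Rightarrow> nat \<Rightarrow> bool" where
  "two_universal H X L \<longleftrightarrow>
     (\<forall>x1\<in>X. \<forall>x2\<in>X. x1 \<noteq> x2 \<longrightarrow> measure_pmf.prob H {h. h x1 = h x2} \<le> 1 / 2 ^ L)"

end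

theory Submission
  imports Defs
begin

abbreviation FF :: "nat \<Rightarrow> ('a::finite \<Rightarrow> int) set" where
  "FF L \<equiv> PiE UNIV (\<lambda>_. {0..<2^L})"

lemma FF_fin: "finite (FF L)" by (simp add: finite_PiE)
lemma FF_ne: "FF L \<noteq> {}"
proof -
  have "(\<lambda>_. 0) \<in> FF L" by (simp add: PiE_UNIV_domain)
  thus ?thesis by blast
qed

lemma prob_H:
  fixes A :: "('a::finite list \<Rightarrow> int) set"
  shows
  "measure_pmf.prob (recursive_hash L B n) A =
     card {f\<in>FF L. ngram_hash L B n f \<in> A} / card (FF L :: ('a::finite \<Rightarrow> int) set)"
  unfolding recursive_hash_def char_hash_def
  by (simp add: measure_pmf_of_set[OF FF_ne[of L] FF_fin[of L]] Int_def vimage_def)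

lemma sum_upd:
  fixes w f :: "'a::finite \<Rightarrow> int"
  shows "(\<Sum>c\<in>UNIV. w c * (f(c0:=v)) c) = (\<Sum>c\<in>UNIV. w c * f c) + w c0 * (v - f c0)"
proof -
  have "(\<Sum>c\<in>UNIV. w c * (f(c0:=v)) c) - (\<Sum>c\<in>UNIV. w c * f c)
       = (\<Sum>c\<in>UNIV. (if c = c0 then w c0 * (v - f c0) else 0))"
    unfolding sum_subtractf[symmetric]
    by (rule sum.cong) (auto simp: algebra_simps)
  also have "\<dots> = w c0 * (v - f c0)" by simp
  finally show ?thesis by simp
qed

lemma lin_uniform:
  fixes w :: "'a::finite \<Rightarrow> int" and L :: nat
  assumes odd: "odd (w c0)" and y: "y \<in> {0..<2^L}"
  shows "real (card {f\<in>FF L. (\<Sum>c\<in>UNIV. w c * f c) mod 2^L = y}) * 2^L = real (card (FF L :: ('a \<Rightarrow> int) set))"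
proof -
  define M :: int where "M = 2^L"
  have Mpos: "M > 0" by (simp add: M_def)
  define G where "G f = (\<Sum>c\<in>UNIV. w c * f c) mod M" for f :: "'a \<Rightarrow> int"
  define \<phi> where "\<phi> t f = f(c0 := (f c0 + t) mod M)" for t and f :: "'a \<Rightarrow> int"
  have FFM: "FF L = {f. \<forall>c. f c \<in> {0..<M}}" by (auto simp: PiE_UNIV_domain M_def)
  have phiF: "\<phi> t f \<in> FF L" if "f \<in> FF L" for t f
    using that Mpos by (auto simp: FFM \<phi>_def)
  have Gphi: "G (\<phi> t f) = (G f + w c0 * t) mod M" for t f
  proof -
    have "G (\<phi> t f) = ((\<Sum>c\<in>UNIV. w c * f c) + w c0 * ((f c0 + t) mod M - f c0)) mod M"
      unfolding G_def \<phi>_def sum_upd ..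
    also have "(f c0 + t) mod M - f c0 = t - M * ((f c0 + t) div M)"
      using minus_mult_div_eq_mod[of "f c0 + t" M] by linarith
    also have "((\<Sum>c\<in>UNIV. w c * f c) + w c0 * (t - M * ((f c0 + t) div M))) mod M
        = ((\<Sum>c\<in>UNIV. w c * f c) + w c0 * t + M * (- w c0 * ((f c0 + t) div M))) mod M"
      by (simp add: algebra_simps)
    also have "\<dots> = ((\<Sum>c\<in>UNIV. w c * f c) + w c0 * t) mod M"
      by (rule mod_mult_self2)
    also have "\<dots> = (G f + w c0 * t) mod M" unfolding G_def by (simp add: mod_add_left_eq)
    finally show ?thesis .
  qed
  have inv: "\<phi> (-t) (\<phi> t f) = f" if "f \<in> FF L" for t f
  proof -
    have "f c0 \<in> {0..<M}" using that by (auto simp: FFM)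
    have "((f c0 + t) mod M + - t) mod M = (f c0 + t + - t) mod M" by (rule mod_add_left_eq)
    also have "\<dots> = f c0" using \<open>f c0 \<in> {0..<M}\<close> by simp
    finally have "((f c0 + t) mod M + - t) mod M = f c0" .
    thus ?thesis by (simp add: \<phi>_def)
  qed
  have "coprime (w c0) 2" using odd by (simp add: coprime_commute)
  hence "coprime (w c0) M" unfolding M_def by simp
  hence "gcd (w c0) M = 1" by simp
  then obtain u v where uv: "u * w c0 + v * M = 1" using bezout_int[of "w c0" M] by auto
  define fib where "fib z = {f\<in>FF L. G f = z}" for z
  have le: "card (fib y1) \<le> card (fib y2)" if "y1 \<in> {0..<M}" "y2 \<in> {0..<M}" for y1 y2
  proof -
    define t where "t = u * (y2 - y1)"
    have "inj_on (\<phi> t) (fib y1)"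
      by (rule inj_on_inverseI[where g="\<phi> (-t)"]) (auto simp: fib_def inv)
    moreover have "\<phi> t ` fib y1 \<subseteq> fib y2"
    proof
      fix g assume "g \<in> \<phi> t ` fib y1"
      then obtain f where f: "f \<in> FF L" "G f = y1" "g = \<phi> t f" by (auto simp: fib_def)
      have "w c0 * t = (u * w c0) * (y2 - y1)" by (simp add: t_def algebra_simps)
      also have "u * w c0 = 1 - v * M" using uv by linarith
      finally have "w c0 * t = (1 - v * M) * (y2 - y1)" .
      hence eqy: "y1 + w c0 * t = y2 + M * (- v * (y2 - y1))" by (simp add: algebra_simps)
      have "(y1 + w c0 * t) mod M = y2 mod M" unfolding eqy by (rule mod_mult_self2)
      also have "\<dots> = y2" using that by simp
      finally show "g \<in> fib y2" using f phiF by (simp add: fib_def Gphi)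
    qed
    moreover have "finite (fib y2)" unfolding fib_def by (rule finite_subset[OF _ FF_fin[of L]]) auto
    ultimately show ?thesis by (meson card_inj_on_le)
  qed
  have yM: "y \<in> {0..<M}" using y by (simp add: M_def)
  have eq: "card (fib z) = card (fib y)" if "z \<in> {0..<M}" for z
    using le[OF that yM] le[OF yM that] by simp
  have "FF L = (\<Union>z\<in>{0..<M}. fib z)"
    using Mpos by (auto simp: fib_def G_def)
  moreover have "card (\<Union>z\<in>{0..<M}. fib z) = (\<Sum>z\<in>{0..<M}. card (fib z))"
  proof (rule card_UN_disjoint)
    show "finite {0..<M}" by simp
    show "\<forall>i\<in>{0..<M}. finite (fib i)"
      unfolding fib_def by (intro ballI finite_subset[OF _ FF_fin[of L]]) auto
    show "\<forall>i\<in>{0..<M}. \<forall>j\<in>{0..<M}. i \<noteq> j \<longrightarrow> fib i \<inter> fib j = {}"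
      by (auto simp: fib_def)
  qed
  ultimately have "card (FF L :: ('a \<Rightarrow> int) set) = (\<Sum>z\<in>{0..<M}. card (fib z))" by simp
  also have "\<dots> = (\<Sum>z\<in>{0..<M}. card (fib y))" using eq by simp
  also have "\<dots> = nat M * card (fib y)" by simp
  finally have "real (card (FF L :: ('a \<Rightarrow> int) set)) = real (nat M) * real (card (fib y))" by simp
  moreover have "real (nat M) = 2^L" by (simp add: M_def)
  ultimately show ?thesis by (simp add: fib_def G_def M_def mult.commute)
qed


definition cf :: "int \<Rightarrow> nat \<Rightarrow> 'a list \<Rightarrow> 'a \<Rightarrow> int" where
  "cf B n x c = (\<Sum>i<n. if x ! i = c then B ^ (n - 1 - i) else 0)"

lemma hash_lin:
  fixes f :: "'a::finite \<Rightarrow> int"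
  shows "ngram_hash L B n f x = (\<Sum>c\<in>UNIV. cf B n x c * f c) mod 2^L"
proof -
  have "(\<Sum>c\<in>UNIV. cf B n x c * f c) = (\<Sum>c\<in>UNIV. \<Sum>i<n. if x ! i = c then B ^ (n - 1 - i) * f (x ! i) else 0)"
    unfolding cf_def sum_distrib_right by (intro sum.cong refl) auto
  also have "\<dots> = (\<Sum>i<n. \<Sum>c\<in>UNIV. if x ! i = c then B ^ (n - 1 - i) * f (x ! i) else 0)"
    by (rule sum.swap)
  also have "\<dots> = (\<Sum>i<n. B ^ (n - 1 - i) * f (x ! i))" by simp
  finally show ?thesis unfolding ngram_hash_def by simp
qed

lemma cf_sum:
  "(\<Sum>c\<in>(UNIV::'a::finite set). cf B n x c) = (\<Sum>i<n. B ^ (n - 1 - i))"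
proof -
  have "(\<Sum>c\<in>(UNIV::'a set). cf B n x c) = (\<Sum>i<n. \<Sum>c\<in>(UNIV::'a set). if x ! i = c then B ^ (n - 1 - i) else 0)"
    unfolding cf_def by (rule sum.swap)
  also have "\<dots> = (\<Sum>i<n. B ^ (n - 1 - i))" by simp
  finally show ?thesis .
qed

lemma odd_total:
  fixes B :: int
  assumes "n \<ge> 1" "even B \<or> odd n"
  shows "odd (\<Sum>i<n. B ^ (n - 1 - i))"
proof (cases "even B")
  case True
  have "{i\<in>{..<n}. odd (B ^ (n - 1 - i))} = {n - 1}"
    using True assms(1) by (auto simp: even_power)
  thus ?thesis by (simp add: even_sum_iff)
next
  case False
  hence "{i\<in>{..<n}. odd (B ^ (n - 1 - i))} = {..<n}" by (auto simp: even_power)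
  thus ?thesis using False assms(2) by (simp add: even_sum_iff)
qed

lemma even_total:
  fixes B :: int
  assumes "odd B" "even n"
  shows "even (\<Sum>i<n. B ^ (n - 1 - i))"
proof -
  have "{i\<in>{..<n}. odd (B ^ (n - 1 - i))} = {..<n}" using assms by (auto simp: even_power)
  thus ?thesis using assms by (simp add: even_sum_iff)
qed

lemma card_FF_pos: "card (FF L :: ('a::finite \<Rightarrow> int) set) > 0"
  using FF_ne FF_fin card_gt_0_iff by blast

lemma part_uniform:
  fixes B :: int
  assumes "n \<ge> 1" "even B \<or> (odd B \<and> odd n)"
  shows "uniform_hash (recursive_hash L B n :: ('a::finite list \<Rightarrow> int) pmf) (ngrams n) L"
  unfolding uniform_hash_def
proof (intro ballI)
  fix x :: "'a list" and y :: int assume y: "y \<in> {0..<2^L}"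
  have "odd (\<Sum>c\<in>(UNIV::'a set). cf B n x c)"
    unfolding cf_sum using odd_total[of n B] assms by auto
  then obtain c0 where c0: "odd (cf B n x c0)"
    by (metis dvd_sum)
  have eq: "{f\<in>FF L. ngram_hash L B n f \<in> {h. h x = y}} = {f\<in>FF L. (\<Sum>c\<in>UNIV. cf B n x c * f c) mod 2^L = y}"
    by (simp add: hash_lin)
  have "real (card {f\<in>FF L. (\<Sum>c\<in>UNIV. cf B n x c * f c) mod 2^L = y}) * 2^L = real (card (FF L :: ('a \<Rightarrow> int) set))"
    using lin_uniform[of "cf B n x" c0 y L] c0 y by simp
  moreover have "real (card (FF L :: ('a \<Rightarrow> int) set)) > 0" using card_FF_pos by simp
  ultimately show "measure_pmf.prob (recursive_hash L B n) {h. h x = y} = 1 / 2 ^ L"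
    unfolding prob_H eq by (simp add: field_simps)
qed

lemma part_nonuniform:
  fixes B :: int
  assumes "L \<ge> 1" "odd B" "even n"
  shows "\<exists>x\<in>ngrams n. \<exists>y\<in>{0..<2^L}. measure_pmf.prob (recursive_hash L B n :: ('a::finite list \<Rightarrow> int) pmf) {h. h x = y} \<noteq> 1 / 2 ^ L"
proof -
  define x :: "'a list" where "x = replicate n undefined"
  have ev: "even (ngram_hash L B n f x)" for f :: "'a \<Rightarrow> int"
  proof -
    have "ngram_hash L B n f x = ((\<Sum>i<n. B ^ (n - 1 - i)) * f undefined) mod 2^L"
      unfolding ngram_hash_def x_def sum_distrib_right by simp
    moreover have "even ((\<Sum>i<n. B ^ (n - 1 - i)) * f undefined)" using even_total[OF assms(2,3)] by simp
    moreover have "even ((2::int)^L)" using assms(1) by simp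
    ultimately show ?thesis by (simp add: dvd_mod)
  qed
  have emp: "{f\<in>FF L. ngram_hash L B n f \<in> {h. h x = 1}} = {}"
  proof -
    { fix f :: "'a \<Rightarrow> int" assume "ngram_hash L B n f x = 1"
      with ev[of f] have False by simp }
    thus ?thesis by blast
  qed
  have "measure_pmf.prob (recursive_hash L B n :: ('a::finite list \<Rightarrow> int) pmf) {h. h x = 1} = 0"
    unfolding prob_H emp by simp
  hence ne: "measure_pmf.prob (recursive_hash L B n :: ('a::finite list \<Rightarrow> int) pmf) {h. h x = 1} \<noteq> 1 / 2 ^ L"
    by simp
  have "(1::int) \<in> {0..<2^L}" using assms(1)
    by (simp add: one_less_power)
  moreover have "x \<in> ngrams n" by (simp add: ngrams_def x_def)
  ultimately show ?thesis using ne by blast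
qed


lemma collision:
  fixes w1 w2 :: "'a::finite list" and a b :: 'a and k :: int
  assumes L: "L \<ge> 1" and ab: "a \<noteq> b" and k: "even k"
    and diff: "\<And>f. (\<Sum>i<n. B^(n-1-i) * f (w1!i)) - (\<Sum>i<n. B^(n-1-i) * f (w2!i)) = k * (f a - f b)"
  shows "measure_pmf.prob (recursive_hash L B n :: ('a list \<Rightarrow> int) pmf) {h. h w1 = h w2} \<ge> 2 / 2^L"
proof -
  define M :: int where "M = 2^L"
  define wd :: "'a \<Rightarrow> int" where "wd c = (if c = a then 1 else 0) - (if c = b then 1 else 0)" for c
  have sd: "(\<Sum>c\<in>UNIV. wd c * f c) = f a - f b" for f :: "'a \<Rightarrow> int"
  proof -
    have "(\<Sum>c\<in>UNIV. wd c * f c) = (\<Sum>c\<in>UNIV. (if c = a then f a else 0) - (if c = b then f b else 0))"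
      by (intro sum.cong refl) (auto simp: wd_def)
    also have "\<dots> = f a - f b" unfolding sum_subtractf by simp
    finally show ?thesis .
  qed
  have oddw: "odd (wd a)" using ab by (simp add: wd_def)
  define D where "D d = {f\<in>FF L. (\<Sum>c\<in>UNIV. wd c * f c) mod 2^L = d}" for d
  define E where "E = {f\<in>FF L. ngram_hash L B n f \<in> {h. h w1 = h w2}}"
  define d1 :: int where "d1 = 2^(L-1)"
  have d1M: "2 * d1 = M" using L unfolding d1_def M_def
    by (metis Suc_diff_le diff_Suc_1 power_Suc)
  have d1r: "d1 \<in> {0..<2^L}" using d1M L by (simp add: d1_def M_def)
  have z: "(0::int) \<in> {0..<2^L}" by simp
  have cD: "real (card (D d)) * 2^L = real (card (FF L :: ('a \<Rightarrow> int) set))" if "d \<in> {0..<2^L}" for d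
    unfolding D_def using lin_uniform[of wd a d L] oddw that by simp
  have sub: "D 0 \<union> D d1 \<subseteq> E"
  proof
    fix f assume f: "f \<in> D 0 \<union> D d1"
    then obtain d where d: "d = 0 \<or> d = d1" "(f a - f b) mod M = d" "f \<in> FF L"
      by (auto simp: D_def sd M_def)
    obtain j where j: "k = 2 * j" using k by blast
    have fd: "f a - f b = M * ((f a - f b) div M) + d" using d(2) by (metis mult_div_mod_eq)
    have "M dvd k * (f a - f b)"
    proof -
      have "k * (f a - f b) = M * (k * ((f a - f b) div M)) + j * (2 * d)"
        by (subst fd) (simp add: j algebra_simps)
      moreover have "M dvd j * (2 * d)" using d(1) d1M by auto
      ultimately show ?thesis by simp
    qed
    hence "ngram_hash L B n f w1 = ngram_hash L B n f w2"
      unfolding ngram_hash_def using diff[of f] by (simp add: mod_eq_dvd_iff M_def)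
    thus "f \<in> E" using d(3) by (simp add: E_def)
  qed
  have "d1 \<noteq> 0" by (simp add: d1_def)
  hence disj: "D 0 \<inter> D d1 = {}" by (auto simp: D_def)
  have finE: "finite E" using FF_fin[of L] unfolding E_def by (rule finite_subset[rotated]) auto
  have finD: "finite (D d)" for d using FF_fin[of L] unfolding D_def by (rule finite_subset[rotated]) auto
  have "card (D 0) + card (D d1) \<le> card E"
    using card_mono[OF finE sub] card_Un_disjoint[OF finD finD disj] by simp
  hence "real (card (D 0)) * 2^L + real (card (D d1)) * 2^L \<le> real (card E) * 2^L"
    by (simp flip: distrib_right of_nat_add)
  hence le: "2 * real (card (FF L :: ('a \<Rightarrow> int) set)) \<le> real (card E) * 2^L"
    using cD[OF z] cD[OF d1r] by simp
  have pos: "real (card (FF L :: ('a \<Rightarrow> int) set)) > 0" using card_FF_pos by simp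
  have "measure_pmf.prob (recursive_hash L B n :: ('a list \<Rightarrow> int) pmf) {h. h w1 = h w2}
        = real (card E) / real (card (FF L :: ('a \<Rightarrow> int) set))"
    unfolding prob_H E_def ..
  also have "\<dots> \<ge> 2 / 2^L" using le pos by (simp add: field_simps)
  finally show ?thesis .
qed


lemma not_pi:
  fixes w1 w2 :: "'a::finite list"
  assumes "w1 \<in> X" "w2 \<in> X" "w1 \<noteq> w2"
    and gt: "measure_pmf.prob (recursive_hash L B n :: ('a list \<Rightarrow> int) pmf) {h. h w1 = h w2} > 1 / 2^L"
  shows "\<not> pairwise_independent (recursive_hash L B n :: ('a list \<Rightarrow> int) pmf) X L"
proof
  assume pi: "pairwise_independent (recursive_hash L B n :: ('a list \<Rightarrow> int) pmf) X L"
  define g :: "('a \<Rightarrow> int) \<Rightarrow> 'a list \<Rightarrow> int" where "g = ngram_hash L B n"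
  define C where "C = real (card (FF L :: ('a \<Rightarrow> int) set))"
  have Cpos: "C > 0" using card_FF_pos by (simp add: C_def)
  define Ey where "Ey y = {f\<in>FF L. g f w1 = y \<and> g f w2 = y}" for y
  have finEy: "finite (Ey y)" for y using FF_fin[of L] unfolding Ey_def by (rule finite_subset[rotated]) auto
  have py: "real (card (Ey y)) / C = 1 / 4^L" if "y \<in> {0..<2^L}" for y
  proof -
    have "measure_pmf.prob (recursive_hash L B n :: ('a list \<Rightarrow> int) pmf) {h. h w1 = y \<and> h w2 = y} = 1 / 4^L"
      using pi assms(1-3) that unfolding pairwise_independent_def by blast
    thus ?thesis unfolding prob_H Ey_def C_def g_def by simp
  qed
  have rng: "g f w \<in> {0..<2^L}" for f w unfolding g_def ngram_hash_def by simp
  have "{f\<in>FF L. g f w1 = g f w2} = (\<Union>y\<in>{0..<2^L}. Ey y)"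
    using rng by (auto simp: Ey_def)
  moreover have "card (\<Union>y\<in>{0..<2^L}. Ey y) = (\<Sum>y\<in>{0..<2^L}. card (Ey y))"
    by (rule card_UN_disjoint) (auto simp: finEy, auto simp: Ey_def)
  ultimately have "card {f\<in>FF L. g f w1 = g f w2} = (\<Sum>y\<in>{0..<2^L}. card (Ey y))"
    by simp
  hence "real (card {f\<in>FF L. g f w1 = g f w2}) / C = (\<Sum>y\<in>{0..<(2::int)^L}. real (card (Ey y)) / C)"
    by (simp add: sum_divide_distrib)
  also have "\<dots> = (\<Sum>y\<in>{0..<(2::int)^L}. 1 / 4^L)" using py by simp
  also have "\<dots> = real (nat (2^L)) / 4^L" by simp
  also have "(4::real)^L = 2^L * 2^L" by (metis mult_2 numeral_Bit0 power_mult_distrib numeral_times_numeral semiring_norm(12))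
  hence "real (nat (2^L)) / 4^L = 1 / 2^L" by simp
  finally have "measure_pmf.prob (recursive_hash L B n :: ('a list \<Rightarrow> int) pmf) {h. h w1 = h w2} = 1 / 2^L"
    unfolding prob_H C_def g_def by simp
  thus False using gt by simp
qed


lemma sum_cons:
  "(\<Sum>i<Suc m. B^(Suc m - 1 - i) * f ((c # r) ! i)) = B^m * f c + (\<Sum>i<m. B^(m-1-i) * f (r ! i))"
  for B :: int and f :: "'a \<Rightarrow> int"
  unfolding sum.lessThan_Suc_shift by simp

lemma part3:
  fixes B :: int
  assumes L: "L \<ge> 1" and n: "n \<ge> 2" and card: "CARD('a::finite) \<ge> 2"
  shows "\<exists>w1\<in>ngrams n. \<exists>w2\<in>ngrams n. w1 \<noteq> w2 \<and>
           measure_pmf.prob (recursive_hash L B n :: ('a list \<Rightarrow> int) pmf) {h. h w1 = h w2} > 1 / 2^L"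
proof -
  obtain a :: 'a where True by blast
  have "UNIV - {a} \<noteq> {}"
  proof
    assume "UNIV - {a} = {}"
    hence "(UNIV::'a set) = {a}" by blast
    hence "CARD('a) = card {a}" by (simp only:)
    thus False using card by simp
  qed
  then obtain b where "b \<in> UNIV - {a}" by blast
  hence ab: "a \<noteq> b" by blast
  have half: "(2::real) / 2^L > 1 / 2^L" by (simp add: divide_strict_right_mono)
  obtain m where m: "n = Suc (Suc m)" using n by (metis add_2_eq_Suc le_Suc_ex)
  show ?thesis
  proof (cases "even B")
    case True
    define r :: "'a list" where "r = replicate (Suc m) a"
    define w1 where "w1 = a # r"
    define w2 where "w2 = b # r"
    have diff: "(\<Sum>i<n. B^(n-1-i) * f (w1!i)) - (\<Sum>i<n. B^(n-1-i) * f (w2!i)) = B^(Suc m) * (f a - f b)"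
      for f :: "'a \<Rightarrow> int"
      unfolding m w1_def w2_def by (simp only: sum_cons) (simp add: algebra_simps)
    have "even (B^(Suc m))" using True by simp
    from collision[OF L ab this diff]
    have "measure_pmf.prob (recursive_hash L B n :: ('a list \<Rightarrow> int) pmf) {h. h w1 = h w2} > 1 / 2^L"
      using half by linarith
    moreover have "w1 \<in> ngrams n" "w2 \<in> ngrams n" "w1 \<noteq> w2"
      using ab by (auto simp: ngrams_def w1_def w2_def r_def m)
    ultimately show ?thesis by blast
  next
    case False
    define r :: "'a list" where "r = replicate m a"
    define w1 where "w1 = a # b # r"
    define w2 where "w2 = b # a # r"
    have diff: "(\<Sum>i<n. B^(n-1-i) * f (w1!i)) - (\<Sum>i<n. B^(n-1-i) * f (w2!i)) = (B^(Suc m) - B^m) * (f a - f b)"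
      for f :: "'a \<Rightarrow> int"
      unfolding m w1_def w2_def by (simp only: sum_cons) (simp add: algebra_simps)
    have "even (B^(Suc m) - B^m)" using False by simp
    from collision[OF L ab this diff]
    have "measure_pmf.prob (recursive_hash L B n :: ('a list \<Rightarrow> int) pmf) {h. h w1 = h w2} > 1 / 2^L"
      using half by linarith
    moreover have "w1 \<in> ngrams n" "w2 \<in> ngrams n" "w1 \<noteq> w2"
      using ab by (auto simp: ngrams_def w1_def w2_def r_def m)
    ultimately show ?thesis by blast
  qed
qed

theorem mainTheorem3:
  fixes L n :: nat and B :: int
  assumes "n \<ge> 1" and "L \<ge> 1"
  defines "H \<equiv> (recursive_hash L B n :: ('a::finite list \<Rightarrow> int) pmf)"
  shows "(even n \<and> odd B \<longrightarrow>
            (\<exists>x\<in>ngrams n. \<exists>y\<in>{0..<2^L}. measure_pmf.prob H {h. h x = y} \<noteq> 1 / 2 ^ L))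
       \<and> (even B \<or> (odd B \<and> odd n) \<longrightarrow> uniform_hash H (ngrams n) L)
       \<and> (n \<ge> 2 \<and> CARD('a) \<ge> 2 \<longrightarrow>
            (\<exists>w1\<in>ngrams n. \<exists>w2\<in>ngrams n. w1 \<noteq> w2 \<and>
                measure_pmf.prob H {h. h w1 = h w2} > 1 / 2 ^ L)
            \<and> \<not> pairwise_independent H (ngrams n) L
            \<and> \<not> two_universal H (ngrams n) L)"
proof (intro conjI impI)
  assume "even n \<and> odd B"
  thus "\<exists>x\<in>ngrams n. \<exists>y\<in>{0..<2^L}. measure_pmf.prob H {h. h x = y} \<noteq> 1 / 2 ^ L"
    unfolding H_def using part_nonuniform[OF assms(2)] by blast
next
  assume "even B \<or> (odd B \<and> odd n)"
  thus "uniform_hash H (ngrams n) L" unfolding H_def using part_uniform[OF assms(1)] by blast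
next
  assume h: "n \<ge> 2 \<and> CARD('a) \<ge> 2"
  then obtain w1 w2 where w: "w1 \<in> ngrams n" "w2 \<in> ngrams n" "w1 \<noteq> w2"
      "measure_pmf.prob H {h. h w1 = h w2} > 1 / 2 ^ L"
    unfolding H_def using part3[OF assms(2)] by blast
  thus "\<exists>w1\<in>ngrams n. \<exists>w2\<in>ngrams n. w1 \<noteq> w2 \<and> measure_pmf.prob H {h. h w1 = h w2} > 1 / 2 ^ L"
    by blast
  show "\<not> pairwise_independent H (ngrams n) L"
    unfolding H_def by (rule not_pi[OF w(1-3)]) (use w(4) in \<open>simp add: H_def\<close>)
  show "\<not> two_universal H (ngrams n) L"
    unfolding two_universal_def using w by force
qed

end
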